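(* Let $k\ge2$, $p\in(0,1)$, $q=1-p$. For all $n\ge1$, $$f^{(k)}_n=p^{(k-1)n}\sum_{i=0}^{n-1}\frac{n-i}{n}\binom{(k-1)n+i-1}{i}q^i.$$
   Context: Let $s^{(k)}_i=\frac{k-1}{ki-1}\binom{ki-1}{i-1}$ ($i\ge1$), $S^{(k)}(z)=\sum_{i\ge1}s^{(k)}_iz^i$, and define $f^{(k)}_0,f^{(k)}_1,\dots$ by the formal power series identity $\sum_{i\ge0}f^{(k)}_iz^i=\dfrac{1}{1-\frac1qS^{(k)}(p^{k-1}qz)}$. (In the $k$-box matchbox process with big-chooser probability $p$ and little-chooser probability $q$, $f^{(k)}_n$ is the probability that after $kn$ steps all boxes contain equal numbers of matches.) *)

theory Defs
  imports "HOL-Computational_Algebra.Formal_Power_Series"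
begin

definition s_coeff :: "nat \<Rightarrow> nat \<Rightarrow> real" where
  "s_coeff k i = (real k - 1) / (real (k * i) - 1) * real ((k * i - 1) choose (i - 1))"

definition S_fps :: "nat \<Rightarrow> real fps" where
  "S_fps k = Abs_fps (\<lambda>i. if i = 0 then 0 else s_coeff k i)"

text \<open>f^{(k)}_n: the n-th coefficient of 1/(1 - (1/q) S^{(k)}(p^{k-1} q z)).
  Substituting c z into a series multiplies the i-th coefficient by c^i.\<close>
definition f_coeff :: "nat \<Rightarrow> real \<Rightarrow> real \<Rightarrow> nat \<Rightarrow> real" where
  "f_coeff k p q n =
     fps_nth (inverse (1 - fps_const (1 / q) *
        Abs_fps (\<lambda>i. fps_nth (S_fps k) i * (p ^ (k - 1) * q) ^ i))) n"

end

theory Submission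
  imports Defs "HOL-Computational_Algebra.Formal_Laurent_Series"
begin
unbundle fps_syntax

lemma lagr_K:
  fixes V :: "real fps"
  assumes V0: "V $ 0 \<noteq> 0" and m1: "1 \<le> m" and mn: "m \<le> n"
  defines "f \<equiv> fps_to_fls (fps_X * V)"
  shows "fls_residue (fls_deriv f * f ^ (m - 1) * inverse f ^ n) = (if m = n then 1 else 0)"
proof -
  have Vnz: "V \<noteq> 0" using V0 by auto
  have XV1: "(fps_X * V) $ 1 \<noteq> 0" using V0 by simp
  have XVnz: "fps_X * V \<noteq> 0" using XV1 by auto
  have fnz: "f \<noteq> 0" using XVnz unfolding f_def by simp
  have sdXV: "subdegree (fps_X * V) = 1"
    using Vnz V0 by (subst subdegree_mult) auto
  have sd: "fls_subdegree f = 1"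
    unfolding f_def fls_subdegree_fls_to_fps using sdXV by simp
  have e1: "f ^ (m - 1) * inverse f ^ n = inverse f ^ (n - m + 1)"
  proof -
    have "inverse f ^ n = inverse f ^ (m - 1) * inverse f ^ (n - m + 1)"
    proof -
      have nn: "n = (m - 1) + (n - m + 1)" using m1 mn by simp
      show ?thesis by (metis nn power_add)
    qed
    moreover have "f ^ (m - 1) * inverse f ^ (m - 1) = 1"
      using fnz by (simp add: power_mult_distrib[symmetric])
    ultimately show ?thesis by (simp add: mult.assoc[symmetric])
  qed
  show ?thesis
  proof (cases "m = n")
    case True
    have eq: "fls_deriv f * f ^ (m - 1) * inverse f ^ n = fls_deriv f * inverse f"
      using e1 True by (simp add: mult.assoc)
    have "fls_residue (fls_deriv f * inverse f) = 1"
      using sd fls_residue_deriv_times_inverse_eq_subdegree(1)[of f] by simp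
    then show ?thesis unfolding eq using True by simp
  next
    case False
    define j where "j = n - m"
    have j1: "j \<ge> 1" using False mn unfolding j_def by simp
    have "fls_deriv (inverse f ^ j) = of_nat j * inverse f ^ (j - 1) * (- fls_deriv f * (inverse f)\<^sup>2)"
      by (simp add: fls_deriv_power fls_inverse_deriv)
    also have "\<dots> = - of_nat j * (fls_deriv f * (inverse f ^ (j - 1) * (inverse f)\<^sup>2))"
      by (simp add: mult_ac)
    also have "inverse f ^ (j - 1) * (inverse f)\<^sup>2 = inverse f ^ (j + 1)"
    proof -
      have "j - 1 + 2 = j + 1" using j1 by simp
      then show ?thesis by (metis power_add)
    qed
    finally have d: "fls_deriv (inverse f ^ j) = - of_nat j * (fls_deriv f * inverse f ^ (j + 1))" .
    have "fls_deriv f * f ^ (m - 1) * inverse f ^ n = fls_deriv f * inverse f ^ (j + 1)"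
      using e1 by (simp add: mult.assoc j_def)
    also have "\<dots> = fls_const (- 1 / of_nat j) * fls_deriv (inverse f ^ j)"
      using j1 by (simp add: d fls_of_nat fls_const_mult_const[symmetric] mult.assoc[symmetric])
    finally show ?thesis using False
      by (simp only: fls_residue_fls_const_times fls_residue_deriv) simp
  qed
qed


lemma lagr_R:
  fixes V F :: "real fps"
  assumes V0: "V $ 0 \<noteq> 0" and n1: "1 \<le> n"
  shows "fls_residue (fps_to_fls F * inverse (fps_to_fls (fps_X * V)) ^ n) = (F * inverse V ^ n) $ (n - 1)"
proof -
  have "inverse (fps_to_fls (fps_X * V)) = fls_X_inv * fps_to_fls (inverse V)"
    using V0 by (simp add: fls_times_fps_to_fls fls_inverse_X fls_inverse_fps_to_fls)
  then have "fps_to_fls F * inverse (fps_to_fls (fps_X * V)) ^ n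
      = fls_X_inv ^ n * fps_to_fls (F * inverse V ^ n)"
    by (simp add: power_mult_distrib fls_times_fps_to_fls fps_to_fls_power algebra_simps)
  also have "\<dots> = fls_shift (int n) (fps_to_fls (F * inverse V ^ n))"
    by (simp add: fls_X_inv_power_times_conv_shift)
  finally show ?thesis using n1 by (simp add: nat_diff_distrib')
qed

lemma ones_power_nth:
  "((Abs_fps (\<lambda>_. 1::real)) ^ r) $ j = real ((r + j - 1) choose j)"
proof (induction r arbitrary: j)
  case 0
  then show ?case by (cases j) auto
next
  case (Suc r)
  have "((Abs_fps (\<lambda>_. 1::real)) ^ Suc r) $ j = (\<Sum>i=0..j. ((Abs_fps (\<lambda>_. 1::real)) ^ r) $ (j - i))"
    by (simp add: fps_mult_nth)
  also have "\<dots> = (\<Sum>i=0..j. ((Abs_fps (\<lambda>_. 1::real)) ^ r) $ i)"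
    by (rule sum.reindex_bij_witness[of _ "\<lambda>i. j - i" "\<lambda>i. j - i"]) auto
  also have "\<dots> = (\<Sum>i=0..j. real ((r + i - 1) choose i))"
    using Suc.IH by simp
  also have "\<dots> = real ((Suc r + j - 1) choose j)"
  proof (cases r)
    case 0
    have "(\<Sum>i=0..j. real ((i - 1) choose i)) = (\<Sum>i\<in>{0}. real ((i - 1) choose i))"
      by (rule sum.mono_neutral_right) auto
    then show ?thesis using 0 by simp
  next
    case (Suc r')
    have "(\<Sum>i=0..j. real ((r' + i) choose i)) = real (\<Sum>i\<le>j. (r' + i) choose i)"
      by (simp add: atLeast0AtMost)
    also have "\<dots> = real (Suc (r' + j) choose j)" by (simp add: sum_choose_lower)
    finally show ?thesis using Suc by simp
  qed
  finally show ?case .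
qed


definition VV :: "nat \<Rightarrow> real fps" where "VV k = (1 - fps_X) ^ (k - 1)"
definition PH :: "nat \<Rightarrow> real fps" where "PH k = fps_X * VV k"
definition SG :: "nat \<Rightarrow> real fps" where "SG k = fps_inv (PH k)"

lemma VV0: "VV k $ 0 = 1" by (simp add: VV_def fps_nth_power_0)
lemma PH0: "PH k $ 0 = 0" by (simp add: PH_def)
lemma PH1: "PH k $ 1 = 1" by (simp add: PH_def VV0)

lemma lagr_L:
  assumes n1: "1 \<le> n" and iN: "i \<le> n"
  shows "real n * (SG k ^ i) $ n = real i * (inverse (VV k) ^ n) $ (n - i)"
proof (cases "i = 0")
  case True
  then show ?thesis using n1 by simp
next
  case False
  then have i1: "1 \<le> i" by simp
  define S where "S = SG k"
  define phi where "phi = PH k"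
  define V where "V = VV k"
  define W where "W = inverse V ^ n"
  have p0: "phi $ 0 = 0" and p1: "phi $ 1 \<noteq> 0" using PH0 PH1 by (auto simp: phi_def)
  have V0: "V $ 0 \<noteq> 0" using VV0 by (simp add: V_def)
  have SX: "S oo phi = fps_X" unfolding S_def SG_def phi_def
    using fps_inv[OF PH0 ] PH1 by simp
  have Aphi: "S ^ i oo phi = fps_X ^ i"
    using fps_compose_power[OF p0, of S i] SX by simp
  have phim: "(phi ^ m) $ j = 0" if "j < m" for j m
  proof -
    have "phi ^ m = fps_X ^ m * V ^ m" by (simp add: phi_def PH_def V_def power_mult_distrib)
    then show ?thesis using that by (simp add: fps_X_power_mult_nth)
  qed
  define P where "P = (\<Sum>m=0..n. fps_const ((S ^ i) $ m) * phi ^ m)"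
  have c1: "P $ j = (fps_X ^ i) $ j" if "j \<le> n" for j
  proof -
    have "P $ j = (\<Sum>m=0..n. (S ^ i) $ m * (phi ^ m) $ j)"
      by (simp add: P_def fps_sum_nth)
    also have "\<dots> = (\<Sum>m=0..j. (S ^ i) $ m * (phi ^ m) $ j)"
      by (rule sum.mono_neutral_right) (use that phim in auto)
    also have "\<dots> = (S ^ i oo phi) $ j" by (simp add: fps_compose_nth)
    finally show ?thesis using Aphi by simp
  qed
  have c2: "(fps_deriv (fps_X ^ i) * W) $ (n - 1) = (fps_deriv P * W) $ (n - 1)"
    unfolding fps_mult_nth
  proof (rule sum.cong)
    fix l assume "l \<in> {0..n - 1}"
    then have "l + 1 \<le> n" using n1 by auto
    then show "fps_deriv (fps_X ^ i) $ l * W $ (n - 1 - l) = fps_deriv P $ l * W $ (n - 1 - l)"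
      using c1 by simp
  qed simp
  have lhs: "(fps_deriv (fps_X ^ i) * W) $ (n - 1) = real i * W $ (n - i)"
  proof -
    have "fps_deriv (fps_X ^ i) * W = fps_const (real i) * (fps_X ^ (i - 1) * W)"
      by (simp add: fps_deriv_power mult.assoc)
    moreover have "(fps_const (real i) * (fps_X ^ (i - 1) * W)) $ (n - 1) = real i * W $ (n - i)"
      using i1 iN by (simp add: fps_X_power_mult_nth)
    ultimately show ?thesis by metis
  qed
  have trm: "real m * (fps_deriv phi * phi ^ (m - 1) * W) $ (n - 1) = (if m = n then real n else 0)"
    if "m \<in> {0..n}" for m
  proof (cases "m = 0")
    case True then show ?thesis using n1 by simp
  next
    case False
    let ?f = "fps_to_fls (fps_X * V)"
    have "(fps_deriv phi * phi ^ (m - 1) * W) $ (n - 1)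
        = fls_residue (fps_to_fls (fps_deriv phi * phi ^ (m - 1)) * inverse ?f ^ n)"
      using lagr_R[OF V0 n1, of "fps_deriv phi * phi ^ (m - 1)"] by (simp add: W_def mult.assoc)
    also have "\<dots> = fls_residue (fls_deriv ?f * ?f ^ (m - 1) * inverse ?f ^ n)"
      by (simp add: fls_times_fps_to_fls fps_to_fls_power fls_deriv_fps_to_fls phi_def PH_def V_def)
    also have "\<dots> = (if m = n then 1 else 0)"
      using lagr_K[OF V0, of m n] False that by simp
    finally show ?thesis by simp
  qed
  have rhs: "(fps_deriv P * W) $ (n - 1) = real n * (S ^ i) $ n"
  proof -
    have dP: "fps_deriv P = (\<Sum>m=0..n. fps_const ((S ^ i) $ m) * (fps_const (real m) * fps_deriv phi * phi ^ (m - 1)))"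
      unfolding P_def fps_deriv_sum by (rule sum.cong[OF refl]) (simp add: fps_deriv_power)
    have "(fps_deriv P * W) $ (n - 1) = (\<Sum>m=0..n. (S ^ i) $ m * (real m * (fps_deriv phi * phi ^ (m - 1) * W) $ (n - 1)))"
      unfolding dP sum_distrib_right fps_sum_nth
    proof (rule sum.cong[OF refl])
      fix m
      have "fps_const ((S ^ i) $ m) * (fps_const (real m) * fps_deriv phi * phi ^ (m - 1)) * W
          = fps_const ((S ^ i) $ m * real m) * (fps_deriv phi * phi ^ (m - 1) * W)"
        by (simp only: fps_const_mult[symmetric] mult.assoc)
      then show "(fps_const ((S ^ i) $ m) * (fps_const (real m) * fps_deriv phi * phi ^ (m - 1)) * W) $ (n - 1)
          = (S ^ i) $ m * (real m * (fps_deriv phi * phi ^ (m - 1) * W) $ (n - 1))"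
        by (simp only: fps_mult_left_const_nth mult.assoc)
    qed
    also have "\<dots> = (\<Sum>m=0..n. (S ^ i) $ m * (if m = n then real n else 0))"
    proof (rule sum.cong[OF refl])
      fix m assume m: "m \<in> {0..n}"
      show "(S ^ i) $ m * (real m * (fps_deriv phi * phi ^ (m - 1) * W) $ (n - 1)) = (S ^ i) $ m * (if m = n then real n else 0)"
        using trm[OF m] by (rule arg_cong)
    qed
    also have "\<dots> = (\<Sum>m=0..n. if m = n then (S ^ i) $ n * real n else 0)"
      by (rule sum.cong) auto
    also have "\<dots> = real n * (S ^ i) $ n" by (simp add: sum.delta')
    finally show ?thesis .
  qed
  show ?thesis unfolding S_def[symmetric] V_def[symmetric] W_def[symmetric] using c2 lhs rhs by linarith
qed


lemma invVV: "inverse (VV k) = Abs_fps (\<lambda>_. 1::real) ^ (k - 1)"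
  unfolding VV_def fps_inverse_power fps_inverse_one_minus_fps_X by simp

lemma Wnth: "(inverse (VV k) ^ n) $ j = real (((k - 1) * n + j - 1) choose j)"
  unfolding invVV power_mult[symmetric] ones_power_nth by simp

lemma SG0: "SG k $ 0 = 0" by (simp add: SG_def fps_inv_def)

lemma S_eq:
  assumes k2: "k \<ge> 2"
  shows "S_fps k = SG k"
proof (rule fps_ext)
  fix m
  show "S_fps k $ m = SG k $ m"
  proof (cases "m = 0")
    case True then show ?thesis by (simp add: S_fps_def SG0)
  next
    case False
    then have m1: "1 \<le> m" by simp
    have L: "real m * SG k $ m = real (((k - 1) * m + (m - 1) - 1) choose (m - 1))"
      using lagr_L[OF m1, of 1 k] m1 by (simp add: Wnth)
    have e1: "(k - 1) * m + (m - 1) - 1 = k * m - 1 - 1" using m1 k2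
      by (simp add: algebra_simps diff_mult_distrib)
    have e2: "k * m - 1 - (m - 1) = (k - 1) * m" using m1 k2
      by (simp add: algebra_simps diff_mult_distrib)
    have nat_id: "((k - 1) * m) * ((k * m - 1) choose (m - 1)) = (k * m - 1) * ((k * m - 1 - 1) choose (m - 1))"
      using binomial_absorb_comp[of "k * m - 1" "m - 1"] e2 by simp
    have km: "k * m \<ge> 2" using k2 m1
      by (metis mult_le_mono nat_mult_1_right)
    have r1: "real (k * m - 1) = real (k * m) - 1" using km k2 m1 by (subst of_nat_diff) auto
    have r2: "real ((k - 1) * m) = (real k - 1) * real m" using k2 by (simp add: of_nat_diff)
    have pos: "real (k * m) - 1 > 0"
    proof -
      have "real (k * m) \<ge> 2" using km by (metis of_nat_le_iff of_nat_numeral)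
      then show ?thesis by linarith
    qed
    have rid: "(real k - 1) * real m * real ((k * m - 1) choose (m - 1))
        = (real (k * m) - 1) * real ((k * m - 1 - 1) choose (m - 1))"
      using arg_cong[OF nat_id, of real] r1 r2 by (simp only: of_nat_mult)
    have "S_fps k $ m = (real k - 1) / (real (k * m) - 1) * real ((k * m - 1) choose (m - 1))"
      using False by (simp add: S_fps_def s_coeff_def)
    also have "\<dots> = real ((k * m - 1 - 1) choose (m - 1)) / real m"
      using pos m1 rid by (simp add: field_simps)
    also have "\<dots> = SG k $ m" using L e1 m1 by (simp add: field_simps)
    finally show ?thesis .
  qed
qed

theorem proposition5p7:
  fixes k n :: nat and p q :: real
  assumes "k \<ge> 2" and "0 < p" and "p < 1" and "q = 1 - p" and "n \<ge> 1"
  shows "f_coeff k p q n =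
    p ^ ((k - 1) * n) *
      (\<Sum>i = 0..n - 1. (real (n - i) / real n) *
         real (((k - 1) * n + i - 1) choose i) * q ^ i)"
proof -
  have k2: "k \<ge> 2" and n1: "1 \<le> n" using assms by auto
  have q0: "q \<noteq> 0" using assms by simp
  define c where "c = p ^ (k - 1) * q"
  define a where "a = 1 / q"
  define T where "T = SG k oo (fps_const c * fps_X)"
  define U where "U = fps_const a * T"
  define ones where "ones = Abs_fps (\<lambda>_. 1::real)"
  have T0: "T $ 0 = 0" by (simp add: T_def SG0)
  have U0: "U $ 0 = 0" by (simp add: U_def T0)
  have Tdef: "Abs_fps (\<lambda>i. fps_nth (S_fps k) i * (p ^ (k - 1) * q) ^ i) = T"
    unfolding T_def fps_compose_linear S_eq[OF k2] c_def by (simp add: mult.commute)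
  have "(1 - fps_X) oo U = 1 - U" using U0 by (simp add: fps_compose_sub_distrib)
  then have comp: "1 - fps_const (1 / q) * T = (1 - fps_X) oo U" by (simp add: U_def a_def)
  have inv: "inverse ((1 - fps_X) oo U) = ones oo U"
  proof -
    have "inverse (1 - fps_X) oo U = inverse ((1 - fps_X) oo U)"
      by (rule fps_inverse_compose[OF U0]) simp
    then show ?thesis unfolding ones_def fps_inverse_one_minus_fps_X by (rule sym)
  qed
  have "f_coeff k p q n = (ones oo U) $ n"
    unfolding f_coeff_def Tdef comp inv ..
  also have "\<dots> = (\<Sum>j=0..n. (U ^ j) $ n)"
    by (simp add: fps_compose_nth ones_def)
  also have "\<dots> = (\<Sum>j=0..n. a ^ j * (c ^ n * (real j * real (((k - 1) * n + (n - j) - 1) choose (n - j)) / real n)))"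
  proof (rule sum.cong[OF refl])
    fix j assume j: "j \<in> {0..n}"
    have "U ^ j = fps_const (a ^ j) * (SG k ^ j oo (fps_const c * fps_X))"
      unfolding U_def T_def
      by (simp add: power_mult_distrib fps_const_power fps_compose_power)
    then have "(U ^ j) $ n = a ^ j * (c ^ n * (SG k ^ j) $ n)"
      by simp
    moreover have "(SG k ^ j) $ n = real j * real (((k - 1) * n + (n - j) - 1) choose (n - j)) / real n"
      using lagr_L[OF n1, of j k] j n1 by (simp add: Wnth field_simps)
    ultimately show "(U ^ j) $ n = a ^ j * (c ^ n * (real j * real (((k - 1) * n + (n - j) - 1) choose (n - j)) / real n))"
      by simp
  qed
  also have "\<dots> = (\<Sum>j=1..n. a ^ j * (c ^ n * (real j * real (((k - 1) * n + (n - j) - 1) choose (n - j)) / real n)))"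
    by (rule sum.mono_neutral_right) auto
  also have "\<dots> = (\<Sum>i=0..n-1. a ^ (n - i) * (c ^ n * (real (n - i) * real (((k - 1) * n + i - 1) choose i) / real n)))"
    using n1
    by (intro sum.reindex_bij_witness[of _ "\<lambda>i. n - i" "\<lambda>i. n - i"]) auto
  also have "\<dots> = (\<Sum>i=0..n-1. p ^ ((k - 1) * n) * ((real (n - i) / real n) *
         real (((k - 1) * n + i - 1) choose i) * q ^ i))"
  proof (rule sum.cong[OF refl])
    fix i assume i: "i \<in> {0..n-1}"
    have "a ^ (n - i) * c ^ n = p ^ ((k - 1) * n) * q ^ i"
    proof -
      have "q ^ n = q ^ (n - i) * q ^ i" using i n1 by (simp add: power_add[symmetric])
      moreover have "a ^ (n - i) * q ^ (n - i) = 1" using q0 by (simp add: a_def power_mult_distrib[symmetric])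
      ultimately show ?thesis unfolding c_def power_mult_distrib power_mult
        by (simp add: mult.commute mult.left_commute)
    qed
    then show "a ^ (n - i) * (c ^ n * (real (n - i) * real (((k - 1) * n + i - 1) choose i) / real n))
        = p ^ ((k - 1) * n) * ((real (n - i) / real n) * real (((k - 1) * n + i - 1) choose i) * q ^ i)"
      by (simp add: field_simps)
  qed
  also have "\<dots> = p ^ ((k - 1) * n) *
      (\<Sum>i = 0..n - 1. (real (n - i) / real n) * real (((k - 1) * n + i - 1) choose i) * q ^ i)"
    by (simp add: sum_distrib_left)
  finally show ?thesis .
qed

end
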